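(* Let $(X_n)_{n\le0}$ be a strongly monotonic Markov process with values in $[0,1]^d$, let $\rho(x,x')=\sum_{k=1}^d a_k|x(k)-x'(k)|$ where $(a_k)$ are positive numbers with $\sum_k a_k=1$, and let $\delta$ be the distance $\delta(s,t)=|s-t|$ on $\mathbb{R}$. Then for every $\ell\le n\le 0$ and all $x_\ell,x'_\ell\in A_\ell$, $$\rho'\big(\mathcal{L}(X_n\mid X_\ell=x_\ell),\mathcal{L}(X_n\mid X_\ell=x'_\ell)\big)=\sum_{k=1}^d a_k\,\delta'\Big(\mathcal{L}\big(X_n(k)\mid X_\ell(k)=x_\ell(k)\big),\mathcal{L}\big(X_n(k)\mid X_\ell(k)=x'_\ell(k)\big)\Big).$$
   Context: $d\ge1$ integer or $d=\infty$; $A_n$ is the support of the law of $X_n$. For a pseudometric $\rho$, $\rho'(\mu,\nu)=\inf\mathbb{E}[\rho(X_\mu,X_\nu)]$ over all couplings of $\mu,\nu$ (Kantorovich pseudometric). An $\mathbb{R}^d$-valued Markov process is monotonic if for each $n<0$ and all $x,x'\in A_n$ there is a coupling $(Y,Y')$ of $\mathcal{L}(X_{n+1}\mid X_n=x)$ and $\mathcal{L}(X_{n+1}\mid X_n=x')$, with law depending measurably on $(x,x')$, such that for each coordinate $k$: $x(k)\le x'(k)\Rightarrow Y(k)\le Y'(k)$ a.s. and $x(k)\ge x'(k)\Rightarrow Y(k)\ge Y'(k)$ a.s. It is strongly monotonic if moreover each coordinate process $(X_n(k))_{n\le0}$ is Markovian and its natural filtration $\mathcal F(k)$ is immersed in the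 natural filtration $\mathcal{F}$ of $(X_n)$ (i.e. $\mathcal F_n(k)\subset\mathcal F_n$ and $\mathcal F_{n+1}(k)$ is conditionally independent of $\mathcal F_n$ given $\mathcal F_n(k)$). *)

theory Defs
  imports "HOL-Probability.Probability"
begin

text \<open>Kernel model of a Markov process indexed by the non-positive integers with values in
  the function space (index type 'd, finite or countably infinite, carrying the product
  topology and its Borel sigma-algebra).  mu n is the law of X_n (n \<le> 0) and
  P n x = L(X_{n+1} | X_n = x) (n < 0) is the one-step transition kernel.\<close>

definition support_of :: "'a::topological_space measure \<Rightarrow> 'a set" where
  "support_of \<mu> = {x. \<forall>U. open U \<and> x \<in> U \<longrightarrow> emeasure \<mu> U > 0}"

fun kiter :: "(int \<Rightarrow> 'a \<Rightarrow> 'a measure) \<Rightarrow> 'a measure \<Rightarrow> int \<Rightarrow> nat \<Rightarrow> 'a \<Rightarrow> 'a measure" where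
  "kiter P S l 0 x = return S x"
| "kiter P S l (Suc j) x = bind (kiter P S l j x) (P (l + int j))"

definition cond_law :: "(int \<Rightarrow> 'a \<Rightarrow> 'a measure) \<Rightarrow> 'a measure \<Rightarrow> int \<Rightarrow> int \<Rightarrow> 'a \<Rightarrow> 'a measure" where
  "cond_law P S l n x = kiter P S l (nat (n - l)) x"

definition couplings :: "'a measure \<Rightarrow> 'b measure \<Rightarrow> ('a \<times> 'b) measure set" where
  "couplings \<mu> \<nu> = {\<pi>. sets \<pi> = sets (\<mu> \<Otimes>\<^sub>M \<nu>) \<and> prob_space \<pi> \<and>
      distr \<pi> \<mu> fst = \<mu> \<and> distr \<pi> \<nu> snd = \<nu>}"

definition kantorovich :: "('a \<Rightarrow> 'a \<Rightarrow> real) \<Rightarrow> 'a measure \<Rightarrow> 'a measure \<Rightarrow> ennreal" where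
  "kantorovich \<rho> \<mu> \<nu> = (INF \<pi> \<in> couplings \<mu> \<nu>. \<integral>\<^sup>+ z. ennreal (\<rho> (fst z) (snd z)) \<partial>\<pi>)"

definition weighted_l1 :: "('d \<Rightarrow> real) \<Rightarrow> ('d \<Rightarrow> real) \<Rightarrow> ('d \<Rightarrow> real) \<Rightarrow> real" where
  "weighted_l1 a x x' = (\<Sum>\<^sub>\<infinity>k. a k * \<bar>x k - x' k\<bar>)"

text \<open>The last clause fixes the version of the conditional law: from a point of the support A_n
  the process jumps into the support A_{n+1} (true for almost every point for any version).\<close>
definition markov_cube :: "(int \<Rightarrow> ('d::countable \<Rightarrow> real) measure) \<Rightarrow>
    (int \<Rightarrow> ('d \<Rightarrow> real) \<Rightarrow> ('d \<Rightarrow> real) measure) \<Rightarrow> bool" where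
  "markov_cube mu P \<longleftrightarrow>
     (\<forall>n\<le>0. prob_space (mu n) \<and> sets (mu n) = sets borel \<and>
             (AE y in mu n. \<forall>k. y k \<in> {0..1})) \<and>
     (\<forall>n<0. P n \<in> borel \<rightarrow>\<^sub>M prob_algebra borel \<and>
            mu (n + 1) = bind (mu n) (P n) \<and>
            (\<forall>x\<in>support_of (mu n). AE y in P n x. y \<in> support_of (mu (n + 1))))"

definition monotonic :: "(int \<Rightarrow> ('d::countable \<Rightarrow> real) measure) \<Rightarrow>
    (int \<Rightarrow> ('d \<Rightarrow> real) \<Rightarrow> ('d \<Rightarrow> real) measure) \<Rightarrow> bool" where
  "monotonic mu P \<longleftrightarrow>
     (\<forall>n<0. \<exists>C :: ('d \<Rightarrow> real) \<times> ('d \<Rightarrow> real) \<Rightarrow> (('d \<Rightarrow> real) \<times> ('d \<Rightarrow> real)) measure.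
        C \<in> (borel \<Otimes>\<^sub>M borel) \<rightarrow>\<^sub>M prob_algebra (borel \<Otimes>\<^sub>M borel) \<and>
        (\<forall>x\<in>support_of (mu n). \<forall>x'\<in>support_of (mu n).
           distr (C (x, x')) borel fst = P n x \<and> distr (C (x, x')) borel snd = P n x' \<and>
           (\<forall>k. (x k \<le> x' k \<longrightarrow> (AE z in C (x, x'). fst z k \<le> snd z k)) \<and>
                (x k \<ge> x' k \<longrightarrow> (AE z in C (x, x'). fst z k \<ge> snd z k)))))"

text \<open>Strong monotonicity: each coordinate process is Markov with transition kernels Q k n
  (Q k n s = L(X_{n+1}(k) | X_n(k) = s)) and its filtration is immersed in that of X, i.e.
  the law of X_{n+1}(k) given the whole X_n = x depends only on x(k) and equals Q k n (x k).\<close>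
definition strongly_monotonic :: "(int \<Rightarrow> ('d::countable \<Rightarrow> real) measure) \<Rightarrow>
    (int \<Rightarrow> ('d \<Rightarrow> real) \<Rightarrow> ('d \<Rightarrow> real) measure) \<Rightarrow> ('d \<Rightarrow> int \<Rightarrow> real \<Rightarrow> real measure) \<Rightarrow> bool" where
  "strongly_monotonic mu P Q \<longleftrightarrow> monotonic mu P \<and>
     (\<forall>k. \<forall>n<0. Q k n \<in> borel \<rightarrow>\<^sub>M prob_algebra borel \<and>
        (\<forall>x\<in>support_of (mu n). distr (P n x) borel (\<lambda>y. y k) = Q k n (x k)))"

end

theory Submission
  imports Defs
begin

lemma comp_meas[measurable]: "(\<lambda>y::'d \<Rightarrow> real. y k) \<in> borel_measurable borel"
  by (rule borel_measurable_continuous_onI) simp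

lemma support_closed: "closed (support_of (\<mu>::'a::topological_space measure))"
proof -
  have "open (- support_of \<mu>)"
    unfolding open_subopen[of "- support_of \<mu>"]
  proof
    fix y assume "y \<in> - support_of \<mu>"
    then obtain U where U: "open U" "y \<in> U" "\<not> emeasure \<mu> U > 0"
      unfolding support_of_def by auto
    have "U \<subseteq> - support_of \<mu>" using U unfolding support_of_def by auto
    then show "\<exists>T. open T \<and> y \<in> T \<and> T \<subseteq> - support_of \<mu>" using U by blast
  qed
  then show ?thesis by (simp add: closed_def)
qed

lemma support_meas[measurable]: "support_of \<mu> \<in> sets borel"
  using support_closed by (rule borel_closed)

lemma support_AE:
  assumes "sets \<mu> = sets borel" "AE y in \<mu>. y \<in> F" "closed F" "x \<in> support_of \<mu>"
  shows "x \<in> F"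
proof (rule ccontr)
  assume "x \<notin> F"
  have o: "open (- F)" using assms(3) by auto
  have "- F \<in> sets \<mu>" using o assms(1) by auto
  moreover from assms(2) obtain N where "{y \<in> space \<mu>. y \<notin> F} \<subseteq> N" "N \<in> sets \<mu>" "emeasure \<mu> N = 0"
    by (auto elim: AE_E)
  moreover have "space \<mu> = UNIV" using assms(1) sets_eq_imp_space_eq by fastforce
  ultimately have "emeasure \<mu> (- F) = 0"
    by (metis (no_types, lifting) Collect_mono_iff Compl_iff emeasure_eq_0 mem_Collect_eq subset_eq UNIV_I)
  with assms(4) o \<open>x \<notin> F\<close> show False unfolding support_of_def by auto
qed

definition cube :: "('d \<Rightarrow> real) set" where "cube = {y. \<forall>k. y k \<in> {0..1}}"

lemma cube_closed: "closed cube"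
proof -
  have "cube = (\<Inter>k. {y. (\<lambda>_. 0) y \<le> y k} \<inter> {y. y k \<le> (\<lambda>_. 1) y})" unfolding cube_def by auto
  moreover have "closed ({y. (\<lambda>_. 0) y \<le> y k} \<inter> {y::'d\<Rightarrow>real. y k \<le> (\<lambda>_. 1) y})" for k
    by (intro closed_Int closed_Collect_le continuous_on_const continuous_on_product_coordinates)
  ultimately show ?thesis by (metis (no_types, lifting) closed_INT)
qed

lemma infsum_nat_ennreal: "infsum (f::nat \<Rightarrow> ennreal) UNIV = suminf f"
  by (metis has_sum_imp_sums has_sum_infsum nonneg_summable_on_complete sums_unique zero_le)

lemma infsum_countable_ennreal:
  fixes F :: "'d::countable \<Rightarrow> ennreal"
  shows "infsum F UNIV = (\<Sum>n. if n \<in> range (to_nat :: 'd \<Rightarrow> nat) then F (from_nat n) else 0)"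
proof -
  have "infsum F UNIV = infsum (F \<circ> from_nat) (range (to_nat :: 'd \<Rightarrow> nat))"
    by (subst infsum_reindex) (auto simp: comp_def)
  also have "\<dots> = infsum (\<lambda>n. if n \<in> range (to_nat :: 'd \<Rightarrow> nat) then F (from_nat n) else 0) UNIV"
    by (subst infsum_cong_neutral[where T=UNIV and g="\<lambda>n. if n \<in> range (to_nat :: 'd \<Rightarrow> nat) then F (from_nat n) else 0"]) auto
  finally show ?thesis by (simp add: infsum_nat_ennreal)
qed

lemma nn_integral_infsum:
  fixes f :: "'d::countable \<Rightarrow> 'a \<Rightarrow> ennreal"
  assumes "\<And>k. f k \<in> borel_measurable M"
  shows "(\<integral>\<^sup>+ x. (\<Sum>\<^sub>\<infinity>k. f k x) \<partial>M) = (\<Sum>\<^sub>\<infinity>k. \<integral>\<^sup>+ x. f k x \<partial>M)"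
proof -
  have "(\<integral>\<^sup>+ x. (\<Sum>\<^sub>\<infinity>k. f k x) \<partial>M) = (\<integral>\<^sup>+ x. (\<Sum>n. if n \<in> range (to_nat::'d\<Rightarrow>nat) then f (from_nat n) x else 0) \<partial>M)"
    by (simp add: infsum_countable_ennreal[where 'd='d])
  also have "\<dots> = (\<Sum>n. \<integral>\<^sup>+ x. (if n \<in> range (to_nat::'d\<Rightarrow>nat) then f (from_nat n) x else 0) \<partial>M)"
  proof (rule nn_integral_suminf)
    fix n show "(\<lambda>x. if n \<in> range (to_nat::'d\<Rightarrow>nat) then f (from_nat n) x else 0) \<in> borel_measurable M"
      by (cases "n \<in> range (to_nat::'d\<Rightarrow>nat)") (simp_all add: assms)
  qed
  also have "\<dots> = (\<Sum>n. if n \<in> range (to_nat::'d\<Rightarrow>nat) then \<integral>\<^sup>+ x. f (from_nat n) x \<partial>M else 0)"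
    by (intro suminf_cong) auto
  also have "\<dots> = (\<Sum>\<^sub>\<infinity>k. \<integral>\<^sup>+ x. f k x \<partial>M)"
    by (simp add: infsum_countable_ennreal[where 'd='d])
  finally show ?thesis .
qed

lemma ennreal_infsum:
  fixes f :: "'a \<Rightarrow> real"
  assumes "f summable_on A" "\<And>x. x \<in> A \<Longrightarrow> 0 \<le> f x"
  shows "ennreal (infsum f A) = (\<Sum>\<^sub>\<infinity>x\<in>A. ennreal (f x))"
proof -
  have "\<And>F. \<lbrakk>finite F; F \<subseteq> A\<rbrakk> \<Longrightarrow> sum (ennreal \<circ> f) F = ennreal (sum f F)"
    by (metis (mono_tags, lifting) comp_def assms(2) subsetD sum.cong sum_ennreal)
  then have "ennreal (infsum f A) = infsum (ennreal \<circ> f) A"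
    by (simp add: infsum_comm_additive_general assms(1))
  then show ?thesis by (simp add: comp_def)
qed

lemma mean_ineq:
  fixes f g :: "'a \<Rightarrow> real"
  assumes "integrable M f" "integrable M g"
  shows "ennreal \<bar>integral\<^sup>L M f - integral\<^sup>L M g\<bar> \<le> (\<integral>\<^sup>+ z. ennreal \<bar>f z - g z\<bar> \<partial>M)"
proof -
  have i: "integrable M (\<lambda>z. \<bar>f z - g z\<bar>)" using assms by auto
  have "\<bar>integral\<^sup>L M f - integral\<^sup>L M g\<bar> = \<bar>\<integral>z. f z - g z \<partial>M\<bar>" using assms by simp
  also have "\<dots> \<le> (\<integral>z. \<bar>f z - g z\<bar> \<partial>M)" by (rule integral_abs_bound)
  finally have "ennreal \<bar>integral\<^sup>L M f - integral\<^sup>L M g\<bar> \<le> ennreal (\<integral>z. \<bar>f z - g z\<bar> \<partial>M)"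
    by (rule ennreal_leI)
  also have "\<dots> = (\<integral>\<^sup>+ z. ennreal \<bar>f z - g z\<bar> \<partial>M)"
    by (rule nn_integral_eq_integral[OF i, symmetric]) auto
  finally show ?thesis .
qed

lemma mean_eq:
  fixes f g :: "'a \<Rightarrow> real"
  assumes "integrable M f" "integrable M g" "(AE z in M. f z \<le> g z) \<or> (AE z in M. g z \<le> f z)"
  shows "(\<integral>\<^sup>+ z. ennreal \<bar>f z - g z\<bar> \<partial>M) = ennreal \<bar>integral\<^sup>L M f - integral\<^sup>L M g\<bar>"
proof -
  have i: "integrable M (\<lambda>z. \<bar>f z - g z\<bar>)" using assms by auto
  have m1: "(\<lambda>z. \<bar>f z - g z\<bar>) \<in> borel_measurable M" using i by auto
  have m2: "(\<lambda>z. g z - f z) \<in> borel_measurable M" "(\<lambda>z. f z - g z) \<in> borel_measurable M" using assms by auto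
  have "(\<integral>\<^sup>+ z. ennreal \<bar>f z - g z\<bar> \<partial>M) = ennreal (\<integral>z. \<bar>f z - g z\<bar> \<partial>M)"
    by (rule nn_integral_eq_integral[OF i]) auto
  also have "(\<integral>z. \<bar>f z - g z\<bar> \<partial>M) = \<bar>integral\<^sup>L M f - integral\<^sup>L M g\<bar>"
    using assms(3)
  proof
    assume ae: "AE z in M. f z \<le> g z"
    have "(\<integral>z. \<bar>f z - g z\<bar> \<partial>M) = (\<integral>z. g z - f z \<partial>M)"
      by (rule integral_cong_AE) (use ae m1 m2 in auto)
    also have "\<dots> = integral\<^sup>L M g - integral\<^sup>L M f" using assms by simp
    finally show ?thesis
      using integral_mono_AE[OF assms(1,2) ae] by simp
  next
    assume ae: "AE z in M. g z \<le> f z"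
    have "(\<integral>z. \<bar>f z - g z\<bar> \<partial>M) = (\<integral>z. f z - g z \<partial>M)"
      by (rule integral_cong_AE) (use ae m1 m2 in auto)
    also have "\<dots> = integral\<^sup>L M f - integral\<^sup>L M g" using assms by simp
    finally show ?thesis
      using integral_mono_AE[OF assms(2,1) ae] by simp
  qed
  finally show ?thesis .
qed



locale chain =
  fixes mu :: "int \<Rightarrow> ('d::countable \<Rightarrow> real) measure"
    and P :: "int \<Rightarrow> ('d \<Rightarrow> real) \<Rightarrow> ('d \<Rightarrow> real) measure"
  assumes mc: "markov_cube mu P"
begin

lemma Pmeas: "i < 0 \<Longrightarrow> P i \<in> borel \<rightarrow>\<^sub>M prob_algebra borel"
  using mc unfolding markov_cube_def by auto

lemma musets: "i \<le> 0 \<Longrightarrow> sets (mu i) = sets borel"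
  using mc unfolding markov_cube_def by auto

lemma Psupp: "i < 0 \<Longrightarrow> y \<in> support_of (mu i) \<Longrightarrow> AE z in P i y. z \<in> support_of (mu (i + 1))"
  using mc unfolding markov_cube_def by auto

lemma supp_cube: "i \<le> 0 \<Longrightarrow> y \<in> support_of (mu i) \<Longrightarrow> y \<in> cube"
proof -
  assume i: "i \<le> 0" and y: "y \<in> support_of (mu i)"
  have ae: "AE y in mu i. y \<in> cube" using mc i unfolding markov_cube_def cube_def by simp
  show ?thesis by (rule support_AE[OF musets[OF i] ae cube_closed y])
qed

lemma kiter_space: "l + int j \<le> 0 \<Longrightarrow> kiter P borel l j x \<in> space (prob_algebra borel)"
proof (induction j)
  case 0
  then show ?case by (simp add: space_prob_algebra prob_space_return)
next
  case (Suc j)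
  then have lt: "l + int j < 0" by simp
  have A: "kiter P borel l j x \<in> space (prob_algebra borel)" using Suc lt by simp
  have B: "P (l + int j) \<in> borel \<rightarrow>\<^sub>M prob_algebra borel" using Pmeas[OF lt] .
  have "kiter P borel l (Suc j) x = kiter P borel l j x \<bind> P (l + int j)" by simp
  then show ?case unfolding space_prob_algebra using prob_space_bind'[OF A B] sets_bind'[OF A B] by simp
qed

lemma kiter_sets: "l + int j \<le> 0 \<Longrightarrow> sets (kiter P borel l j x) = sets borel"
  using kiter_space by (simp add: space_prob_algebra)

lemma kiter_prob: "l + int j \<le> 0 \<Longrightarrow> prob_space (kiter P borel l j x)"
  using kiter_space by (simp add: space_prob_algebra)

lemma kiter_space_ne: "l + int j \<le> 0 \<Longrightarrow> space (kiter P borel l j x) = UNIV"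
proof -
  assume "l + int j \<le> 0"
  from sets_eq_imp_space_eq[OF kiter_sets[OF this]] show ?thesis by simp
qed

lemma Pmeas_sub: "i < 0 \<Longrightarrow> sets M = sets borel \<Longrightarrow> P i \<in> M \<rightarrow>\<^sub>M subprob_algebra borel"
  using measurable_prob_algebraD[OF Pmeas[of i]] measurable_cong_sets[of M borel "subprob_algebra borel" "subprob_algebra borel"] by simp

lemma kiter_supp:
  assumes "x \<in> support_of (mu l)"
  shows "l + int j \<le> 0 \<Longrightarrow> AE y in kiter P borel l j x. y \<in> support_of (mu (l + int j))"
proof (induction j)
  case 0
  have "Measurable.pred borel (\<lambda>y. y \<in> support_of (mu l))" by measurable
  then have "(AE y in return borel x. y \<in> support_of (mu l)) = (x \<in> support_of (mu l))"
    by (intro AE_return) auto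
  then show ?case using assms unfolding kiter.simps(1) by simp
next
  case (Suc j)
  then have lt: "l + int j < 0" by simp
  have "AE y in kiter P borel l j x. y \<in> support_of (mu (l + int j))"
    using Suc.IH lt by simp
  then have "AE y in kiter P borel l j x. AE z in P (l + int j) y. z \<in> support_of (mu (l + int j + 1))"
    by eventually_elim (rule Psupp[OF lt])
  moreover have e: "l + int j + 1 = l + int (Suc j)" by simp
  ultimately have "AE y in kiter P borel l j x. AE z in P (l + int j) y. z \<in> support_of (mu (l + int (Suc j)))"
    by (simp only: e)
  moreover have "Measurable.pred borel (\<lambda>y. y \<in> support_of (mu (l + int (Suc j))))" by measurable
  ultimately have "AE y in kiter P borel l j x \<bind> P (l + int j). y \<in> support_of (mu (l + int (Suc j)))"
    using AE_bind[OF Pmeas_sub[OF lt kiter_sets]] lt by simp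
  then show ?case by (simp only: kiter.simps)
qed

lemma kiter_cube:
  assumes "x \<in> support_of (mu l)" "l + int j \<le> 0"
  shows "AE y in kiter P borel l j x. y \<in> cube"
  using kiter_supp[OF assms] by eventually_elim (rule supp_cube[OF assms(2)])

end

locale schain = chain mu P for mu :: "int \<Rightarrow> ('d::countable \<Rightarrow> real) measure" and P +
  fixes Q :: "'d \<Rightarrow> int \<Rightarrow> real \<Rightarrow> real measure"
  assumes Qmeas: "i < 0 \<Longrightarrow> Q k i \<in> borel \<rightarrow>\<^sub>M prob_algebra borel"
    and PQ: "i < 0 \<Longrightarrow> y \<in> support_of (mu i) \<Longrightarrow> distr (P i y) borel (\<lambda>y. y k) = Q k i (y k)"
begin

lemma coord_law:
  assumes "x \<in> support_of (mu l)"
  shows "l + int j \<le> 0 \<Longrightarrow> distr (kiter P borel l j x) borel (\<lambda>y. y k) = kiter (Q k) borel l j (x k)"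
proof (induction j)
  case 0
  have "distr (return borel x) borel (\<lambda>y. y k) = return borel (x k)"
    by (rule distr_return) auto
  then show ?case by (simp only: kiter.simps)
next
  case (Suc j)
  then have lt: "l + int j < 0" by simp
  let ?M = "kiter P borel l j x"
  let ?i = "l + int j"
  have sM: "sets ?M = sets borel" using lt kiter_sets by simp
  have ne: "space ?M \<noteq> {}" using lt kiter_space_ne by simp
  have pk: "(\<lambda>y::'d\<Rightarrow>real. y k) \<in> ?M \<rightarrow>\<^sub>M borel"
    by (subst measurable_cong_sets[OF sM refl]) (rule comp_meas)
  have Qs: "Q k ?i \<in> borel \<rightarrow>\<^sub>M subprob_algebra borel"
    using measurable_prob_algebraD[OF Qmeas[OF lt]] .
  have "distr (kiter P borel l (Suc j) x) borel (\<lambda>y. y k) = distr (?M \<bind> P ?i) borel (\<lambda>y. y k)"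
    by (simp only: kiter.simps)
  also have "\<dots> = ?M \<bind> (\<lambda>y. distr (P ?i y) borel (\<lambda>y. y k))"
    by (rule distr_bind[OF Pmeas_sub[OF lt sM] ne comp_meas])
  also have "\<dots> = ?M \<bind> (\<lambda>y. Q k ?i (y k))"
  proof (rule bind_cong_AE[where B=borel])
    show "(\<lambda>y. distr (P ?i y) borel (\<lambda>y. y k)) \<in> ?M \<rightarrow>\<^sub>M subprob_algebra borel"
      by (rule measurable_compose[OF Pmeas_sub[OF lt sM] measurable_distr[OF comp_meas]])
    show "(\<lambda>y. Q k ?i (y k)) \<in> ?M \<rightarrow>\<^sub>M subprob_algebra borel"
      by (rule measurable_compose[OF pk Qs])
    show "AE y in ?M. distr (P ?i y) borel (\<lambda>y. y k) = Q k ?i (y k)"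
    proof -
      have "AE y in ?M. y \<in> support_of (mu ?i)" using kiter_supp[OF assms, of j] lt by simp
      then show ?thesis by eventually_elim (rule PQ[OF lt])
    qed
  qed (rule refl)
  also have "\<dots> = distr ?M borel (\<lambda>y. y k) \<bind> Q k ?i"
    by (rule bind_distr[OF pk Qs ne, symmetric])
  also have "\<dots> = kiter (Q k) borel l j (x k) \<bind> Q k ?i"
    using Suc lt by simp
  also have "\<dots> = kiter (Q k) borel l (Suc j) (x k)"
    by (simp only: kiter.simps)
  finally show ?case .
qed

end


lemma fst_comp_meas[measurable]: "(\<lambda>z::('d\<Rightarrow>real)\<times>('d\<Rightarrow>real). fst z k) \<in> borel_measurable (borel \<Otimes>\<^sub>M borel)"
  using measurable_compose[OF measurable_fst comp_meas] .
lemma snd_comp_meas[measurable]: "(\<lambda>z::('d\<Rightarrow>real)\<times>('d\<Rightarrow>real). snd z k) \<in> borel_measurable (borel \<Otimes>\<^sub>M borel)"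
  using measurable_compose[OF measurable_snd comp_meas] .

locale mchain = chain mu P for mu :: "int \<Rightarrow> ('d::countable \<Rightarrow> real) measure" and P +
  fixes C :: "int \<Rightarrow> ('d \<Rightarrow> real) \<times> ('d \<Rightarrow> real) \<Rightarrow> (('d \<Rightarrow> real) \<times> ('d \<Rightarrow> real)) measure"
    and x x' :: "'d \<Rightarrow> real" and l :: int
  assumes Cmeas: "i < 0 \<Longrightarrow> C i \<in> (borel \<Otimes>\<^sub>M borel) \<rightarrow>\<^sub>M prob_algebra (borel \<Otimes>\<^sub>M borel)"
    and Cmarg: "i < 0 \<Longrightarrow> y \<in> support_of (mu i) \<Longrightarrow> y' \<in> support_of (mu i) \<Longrightarrow>
       distr (C i (y, y')) borel fst = P i y \<and> distr (C i (y, y')) borel snd = P i y'"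
    and Cmono: "i < 0 \<Longrightarrow> y \<in> support_of (mu i) \<Longrightarrow> y' \<in> support_of (mu i) \<Longrightarrow>
       (y k \<le> y' k \<longrightarrow> (AE z in C i (y, y'). fst z k \<le> snd z k)) \<and>
       (y k \<ge> y' k \<longrightarrow> (AE z in C i (y, y'). fst z k \<ge> snd z k))"
    and xs: "x \<in> support_of (mu l)" and xs': "x' \<in> support_of (mu l)"
begin

abbreviation "BB \<equiv> (borel \<Otimes>\<^sub>M borel :: (('d \<Rightarrow> real) \<times> ('d \<Rightarrow> real)) measure)"
abbreviation "J j \<equiv> kiter C BB l j (x, x')"

definition jinv :: "nat \<Rightarrow> ('d \<Rightarrow> real) \<times> ('d \<Rightarrow> real) \<Rightarrow> bool" where
  "jinv j z \<longleftrightarrow> fst z \<in> support_of (mu (l + int j)) \<and> snd z \<in> support_of (mu (l + int j)) \<and>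
     (\<forall>k. (x k \<le> x' k \<longrightarrow> fst z k \<le> snd z k) \<and> (x' k \<le> x k \<longrightarrow> snd z k \<le> fst z k))"

lemma inv_meas0: "Measurable.pred BB (\<lambda>z. jinv j z)"
  unfolding jinv_def by measurable

lemma inv_meas[measurable]: "Measurable.pred BB (jinv j)"
  using inv_meas0 by simp

lemma spaceBB: "space BB = UNIV" by (simp add: space_pair_measure)

lemma J_space: "l + int j \<le> 0 \<Longrightarrow> J j \<in> space (prob_algebra BB)"
proof (induction j)
  case 0
  have "return BB (x, x') \<in> space (prob_algebra BB)"
    by (simp add: space_prob_algebra prob_space_return spaceBB)
  then show ?case by (simp only: kiter.simps)
next
  case (Suc j)
  then have lt: "l + int j < 0" by simp
  have A: "J j \<in> space (prob_algebra BB)" using Suc lt by simp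
  have B: "C (l + int j) \<in> BB \<rightarrow>\<^sub>M prob_algebra BB" using Cmeas[OF lt] .
  have "J (Suc j) = J j \<bind> C (l + int j)" by (simp only: kiter.simps)
  then show ?case unfolding space_prob_algebra using prob_space_bind'[OF A B] sets_bind'[OF A B] by simp
qed

lemma J_sets: "l + int j \<le> 0 \<Longrightarrow> sets (J j) = sets BB"
  using J_space by (simp add: space_prob_algebra)

lemma J_prob: "l + int j \<le> 0 \<Longrightarrow> prob_space (J j)"
  using J_space by (simp add: space_prob_algebra)

lemma J_space_ne: "l + int j \<le> 0 \<Longrightarrow> space (J j) = UNIV"
proof -
  assume "l + int j \<le> 0"
  from sets_eq_imp_space_eq[OF J_sets[OF this]] show ?thesis by (simp add: spaceBB)
qed

lemma Cmeas_sub: "i < 0 \<Longrightarrow> sets M = sets BB \<Longrightarrow> C i \<in> M \<rightarrow>\<^sub>M subprob_algebra BB"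
  using measurable_prob_algebraD[OF Cmeas[of i]] measurable_cong_sets[of M BB "subprob_algebra BB" "subprob_algebra BB"] by simp

lemma C_sets: "i < 0 \<Longrightarrow> sets (C i z) = sets BB"
  using measurable_space[OF Cmeas[of i], of z] by (simp add: space_prob_algebra spaceBB)

lemma inv_step:
  assumes lt: "l + int j < 0" and iv: "jinv j z"
  shows "AE w in C (l + int j) z. jinv (Suc j) w"
proof -
  let ?i = "l + int j"
  have z: "z = (fst z, snd z)" by simp
  have s1: "fst z \<in> support_of (mu ?i)" using iv unfolding jinv_def by simp
  have s2: "snd z \<in> support_of (mu ?i)" using iv unfolding jinv_def by simp
  have e: "?i + 1 = l + int (Suc j)" by simp
  have mf: "fst \<in> C ?i z \<rightarrow>\<^sub>M borel"
    by (subst measurable_cong_sets[OF C_sets[OF lt] refl]) (rule measurable_fst)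
  have ms: "snd \<in> C ?i z \<rightarrow>\<^sub>M borel"
    by (subst measurable_cong_sets[OF C_sets[OF lt] refl]) (rule measurable_snd)
  have cm: "distr (C ?i z) borel fst = P ?i (fst z) \<and> distr (C ?i z) borel snd = P ?i (snd z)"
    using Cmarg[OF lt s1 s2] by simp
  have "AE y in P ?i (fst z). y \<in> support_of (mu (l + int (Suc j)))"
    using Psupp[OF lt s1] by (simp only: e)
  then have "AE y in distr (C ?i z) borel fst. y \<in> support_of (mu (l + int (Suc j)))"
    unfolding conjunct1[OF cm] .
  then have a1: "AE w in C ?i z. fst w \<in> support_of (mu (l + int (Suc j)))"
    by (rule AE_distrD[OF mf])
  have "AE y in P ?i (snd z). y \<in> support_of (mu (l + int (Suc j)))"
    using Psupp[OF lt s2] by (simp only: e)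
  then have "AE y in distr (C ?i z) borel snd. y \<in> support_of (mu (l + int (Suc j)))"
    unfolding conjunct2[OF cm] .
  then have a2: "AE w in C ?i z. snd w \<in> support_of (mu (l + int (Suc j)))"
    by (rule AE_distrD[OF ms])
  have a3: "AE w in C ?i z. \<forall>k. (x k \<le> x' k \<longrightarrow> fst w k \<le> snd w k) \<and> (x' k \<le> x k \<longrightarrow> snd w k \<le> fst w k)"
    unfolding AE_all_countable
  proof
    fix k
    have o: "(x k \<le> x' k \<longrightarrow> fst z k \<le> snd z k) \<and> (x' k \<le> x k \<longrightarrow> snd z k \<le> fst z k)"
      using iv by (auto simp: jinv_def)
    have m: "(fst z k \<le> snd z k \<longrightarrow> (AE w in C ?i z. fst w k \<le> snd w k)) \<and>
       (fst z k \<ge> snd z k \<longrightarrow> (AE w in C ?i z. fst w k \<ge> snd w k))"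
      using Cmono[OF lt s1 s2, of k] unfolding prod.collapse .
    have b1: "AE w in C ?i z. x k \<le> x' k \<longrightarrow> fst w k \<le> snd w k"
    proof (cases "x k \<le> x' k")
      case True then show ?thesis using o m by auto
    qed simp
    have b2: "AE w in C ?i z. x' k \<le> x k \<longrightarrow> snd w k \<le> fst w k"
    proof (cases "x' k \<le> x k")
      case True then show ?thesis using o m by auto
    qed simp
    show "AE w in C ?i z. (x k \<le> x' k \<longrightarrow> fst w k \<le> snd w k) \<and> (x' k \<le> x k \<longrightarrow> snd w k \<le> fst w k)"
      using b1 b2 by eventually_elim simp
  qed
  show ?thesis using a1 a2 a3 unfolding jinv_def by eventually_elim simp
qed

lemma J_inv: "l + int j \<le> 0 \<Longrightarrow> AE z in J j. jinv j z"
proof (induction j)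
  case 0
  have "(AE z in return BB (x, x'). jinv 0 z) = jinv 0 (x, x')"
    by (rule AE_return) (auto simp: spaceBB)
  moreover have "jinv 0 (x, x')" using xs xs' by (auto simp: jinv_def)
  ultimately show ?case by (simp only: kiter.simps)
next
  case (Suc j)
  then have lt: "l + int j < 0" by simp
  have "AE z in J j. jinv j z" using Suc lt by simp
  then have "AE z in J j. AE w in C (l + int j) z. jinv (Suc j) w"
    by eventually_elim (rule inv_step[OF lt])
  then have "AE w in J j \<bind> C (l + int j). jinv (Suc j) w"
    using AE_bind[OF Cmeas_sub[OF lt J_sets] inv_meas] lt by simp
  then show ?case by (simp only: kiter.simps)
qed

lemma J_marg:
  "l + int j \<le> 0 \<Longrightarrow> distr (J j) borel fst = kiter P borel l j x \<and> distr (J j) borel snd = kiter P borel l j x'"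
proof (induction j)
  case 0
  have "distr (return BB (x, x')) borel fst = return borel x"
    by (subst distr_return) (auto simp: spaceBB)
  moreover have "distr (return BB (x, x')) borel snd = return borel x'"
    by (subst distr_return) (auto simp: spaceBB)
  ultimately show ?case by (simp only: kiter.simps)
next
  case (Suc j)
  then have lt: "l + int j < 0" by simp
  let ?i = "l + int j"
  have sJ: "sets (J j) = sets BB" using lt J_sets by simp
  have ne: "space (J j) \<noteq> {}" using lt J_space_ne by simp
  have Cs: "C ?i \<in> J j \<rightarrow>\<^sub>M subprob_algebra BB" by (rule Cmeas_sub[OF lt sJ])
  have mf: "fst \<in> J j \<rightarrow>\<^sub>M borel"
    by (subst measurable_cong_sets[OF sJ refl]) (rule measurable_fst)
  have ms: "snd \<in> J j \<rightarrow>\<^sub>M borel"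
    by (subst measurable_cong_sets[OF sJ refl]) (rule measurable_snd)
  have Ps: "P ?i \<in> borel \<rightarrow>\<^sub>M subprob_algebra borel"
    using measurable_prob_algebraD[OF Pmeas[OF lt]] .
  have ivs: "AE z in J j. jinv j z" using J_inv lt by simp
  have IH: "distr (J j) borel fst = kiter P borel l j x" "distr (J j) borel snd = kiter P borel l j x'"
    using Suc lt by simp_all
  have "distr (J (Suc j)) borel fst = distr (J j \<bind> C ?i) borel fst"
    by (simp only: kiter.simps)
  also have "\<dots> = J j \<bind> (\<lambda>z. distr (C ?i z) borel fst)"
    by (rule distr_bind[OF Cs ne measurable_fst])
  also have "\<dots> = J j \<bind> (\<lambda>z. P ?i (fst z))"
  proof (rule bind_cong_AE[where B=borel])
    show "(\<lambda>z. distr (C ?i z) borel fst) \<in> J j \<rightarrow>\<^sub>M subprob_algebra borel"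
      using measurable_compose[OF Cs measurable_distr[OF measurable_fst]] .
    show "(\<lambda>z. P ?i (fst z)) \<in> J j \<rightarrow>\<^sub>M subprob_algebra borel"
      using measurable_compose[OF mf Ps] .
    show "AE z in J j. distr (C ?i z) borel fst = P ?i (fst z)"
      using ivs
    proof eventually_elim
      case (elim z)
      then have "fst z \<in> support_of (mu ?i)" "snd z \<in> support_of (mu ?i)" by (auto simp: jinv_def)
      from Cmarg[OF lt this] show ?case by simp
    qed
  qed (rule refl)
  also have "\<dots> = distr (J j) borel fst \<bind> P ?i"
    by (rule bind_distr[OF mf Ps ne, symmetric])
  also have "\<dots> = kiter P borel l (Suc j) x"
    using IH by (simp only: kiter.simps)
  finally have 1: "distr (J (Suc j)) borel fst = kiter P borel l (Suc j) x" .
  have "distr (J (Suc j)) borel snd = distr (J j \<bind> C ?i) borel snd"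
    by (simp only: kiter.simps)
  also have "\<dots> = J j \<bind> (\<lambda>z. distr (C ?i z) borel snd)"
    by (rule distr_bind[OF Cs ne measurable_snd])
  also have "\<dots> = J j \<bind> (\<lambda>z. P ?i (snd z))"
  proof (rule bind_cong_AE[where B=borel])
    show "(\<lambda>z. distr (C ?i z) borel snd) \<in> J j \<rightarrow>\<^sub>M subprob_algebra borel"
      using measurable_compose[OF Cs measurable_distr[OF measurable_snd]] .
    show "(\<lambda>z. P ?i (snd z)) \<in> J j \<rightarrow>\<^sub>M subprob_algebra borel"
      using measurable_compose[OF ms Ps] .
    show "AE z in J j. distr (C ?i z) borel snd = P ?i (snd z)"
      using ivs
    proof eventually_elim
      case (elim z)
      then have "fst z \<in> support_of (mu ?i)" "snd z \<in> support_of (mu ?i)" by (auto simp: jinv_def)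
      from Cmarg[OF lt this] show ?case by simp
    qed
  qed (rule refl)
  also have "\<dots> = distr (J j) borel snd \<bind> P ?i"
    by (rule bind_distr[OF ms Ps ne, symmetric])
  also have "\<dots> = kiter P borel l (Suc j) x'"
    using IH by (simp only: kiter.simps)
  finally show ?case using 1 by simp
qed

end


lemma coupling_fst:
  fixes f :: "'a \<Rightarrow> real"
  assumes "\<pi> \<in> couplings \<mu> \<nu>" "f \<in> borel_measurable \<mu>" "integrable \<mu> f"
  shows "integrable \<pi> (\<lambda>z. f (fst z))" "(\<integral>z. f (fst z) \<partial>\<pi>) = (\<integral>y. f y \<partial>\<mu>)"
proof -
  have s: "sets \<pi> = sets (\<mu> \<Otimes>\<^sub>M \<nu>)" and d: "distr \<pi> \<mu> fst = \<mu>"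
    using assms(1) unfolding couplings_def by auto
  have mf: "fst \<in> \<pi> \<rightarrow>\<^sub>M \<mu>"
    by (subst measurable_cong_sets[OF s refl]) (rule measurable_fst)
  have "integrable (distr \<pi> \<mu> fst) f" using d assms(3) by simp
  then show "integrable \<pi> (\<lambda>z. f (fst z))"
    using integrable_distr_eq[OF mf assms(2)] by simp
  have "integral\<^sup>L (distr \<pi> \<mu> fst) f = (\<integral>z. f (fst z) \<partial>\<pi>)"
    by (rule integral_distr[OF mf assms(2)])
  then show "(\<integral>z. f (fst z) \<partial>\<pi>) = (\<integral>y. f y \<partial>\<mu>)" using d by simp
qed

lemma coupling_snd:
  fixes f :: "'a \<Rightarrow> real"
  assumes "\<pi> \<in> couplings \<mu> \<nu>" "f \<in> borel_measurable \<nu>" "integrable \<nu> f"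
  shows "integrable \<pi> (\<lambda>z. f (snd z))" "(\<integral>z. f (snd z) \<partial>\<pi>) = (\<integral>y. f y \<partial>\<nu>)"
proof -
  have s: "sets \<pi> = sets (\<mu> \<Otimes>\<^sub>M \<nu>)" and d: "distr \<pi> \<nu> snd = \<nu>"
    using assms(1) unfolding couplings_def by auto
  have mf: "snd \<in> \<pi> \<rightarrow>\<^sub>M \<nu>"
    by (subst measurable_cong_sets[OF s refl]) (rule measurable_snd)
  have "integrable (distr \<pi> \<nu> snd) f" using d assms(3) by simp
  then show "integrable \<pi> (\<lambda>z. f (snd z))"
    using integrable_distr_eq[OF mf assms(2)] by simp
  have "integral\<^sup>L (distr \<pi> \<nu> snd) f = (\<integral>z. f (snd z) \<partial>\<pi>)"
    by (rule integral_distr[OF mf assms(2)])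
  then show "(\<integral>z. f (snd z) \<partial>\<pi>) = (\<integral>y. f y \<partial>\<nu>)" using d by simp
qed

lemma coupling_lower:
  fixes f g :: "'a \<Rightarrow> real"
  assumes "\<pi> \<in> couplings \<mu> \<nu>" "f \<in> borel_measurable \<mu>" "integrable \<mu> f"
    "g \<in> borel_measurable \<nu>" "integrable \<nu> g"
  shows "ennreal \<bar>(\<integral>y. f y \<partial>\<mu>) - (\<integral>y. g y \<partial>\<nu>)\<bar> \<le> (\<integral>\<^sup>+ z. ennreal \<bar>f (fst z) - g (snd z)\<bar> \<partial>\<pi>)"
  using mean_ineq[OF coupling_fst(1)[OF assms(1-3)] coupling_snd(1)[OF assms(1,4,5)]]
    coupling_fst(2)[OF assms(1-3)] coupling_snd(2)[OF assms(1,4,5)] by simp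

locale fin = mchain mu P C x x' l + schain mu P Q
  for mu :: "int \<Rightarrow> ('d::countable \<Rightarrow> real) measure" and P C x x' l Q +
  fixes N :: nat and a :: "'d \<Rightarrow> real"
  assumes lN: "l + int N \<le> 0"
    and apos: "\<And>k. a k > 0" and asum: "(a has_sum 1) UNIV"
begin

abbreviation "Mx \<equiv> kiter P borel l N x"
abbreviation "Mx' \<equiv> kiter P borel l N x'"
abbreviation "JN \<equiv> J N"

definition m :: "'d \<Rightarrow> real" where "m k = (\<integral>y. y k \<partial>Mx)"
definition m' :: "'d \<Rightarrow> real" where "m' k = (\<integral>y. y k \<partial>Mx')"

lemma sMx: "sets Mx = sets borel" "sets Mx' = sets borel" using kiter_sets lN by auto

lemma pMx: "prob_space Mx" "prob_space Mx'" using kiter_prob lN by auto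

lemma comp_meas_M: "(\<lambda>y. y k) \<in> borel_measurable Mx" "(\<lambda>y. y k) \<in> borel_measurable Mx'"
  by (subst measurable_cong_sets[OF sMx(1) refl], rule comp_meas)
     (subst measurable_cong_sets[OF sMx(2) refl], rule comp_meas)

lemma int_bound:
  assumes "prob_space M" "f \<in> borel_measurable M" "AE y in M. \<bar>f y\<bar> \<le> 1"
  shows "integrable M (f :: _ \<Rightarrow> real)"
proof -
  interpret prob_space M by fact
  show ?thesis using assms(3) by (intro integrable_const_bound[where B=1] assms(2)) simp
qed

lemma cubeAE: "AE y in Mx. y \<in> cube" "AE y in Mx'. y \<in> cube"
  using kiter_cube[OF xs lN] kiter_cube[OF xs' lN] by auto

lemma int_Mx: "integrable Mx (\<lambda>y. y k)" "integrable Mx' (\<lambda>y. y k)"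
proof -
  have "AE y in Mx. \<bar>y k\<bar> \<le> 1" using cubeAE(1) by eventually_elim (auto simp: cube_def)
  then show "integrable Mx (\<lambda>y. y k)" by (rule int_bound[OF pMx(1) comp_meas_M(1)])
  have "AE y in Mx'. \<bar>y k\<bar> \<le> 1" using cubeAE(2) by eventually_elim (auto simp: cube_def)
  then show "integrable Mx' (\<lambda>y. y k)" by (rule int_bound[OF pMx(2) comp_meas_M(2)])
qed

lemma J_coupling: "JN \<in> couplings Mx Mx'"
proof -
  have "sets JN = sets (Mx \<Otimes>\<^sub>M Mx')"
    using J_sets[OF lN] sets_pair_measure_cong[OF sMx(1) sMx(2)] by simp
  moreover have "distr JN Mx fst = Mx"
    using conjunct1[OF J_marg[OF lN]] distr_cong[OF refl sMx(1), of JN fst fst] by simp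
  moreover have "distr JN Mx' snd = Mx'"
    using conjunct2[OF J_marg[OF lN]] distr_cong[OF refl sMx(2), of JN snd snd] by simp
  ultimately show ?thesis using J_prob[OF lN] unfolding couplings_def by simp
qed

lemma D_eq: "(\<integral>\<^sup>+ z. ennreal \<bar>fst z k - snd z k\<bar> \<partial>JN) = ennreal \<bar>m k - m' k\<bar>"
proof -
  have i1: "integrable JN (\<lambda>z. fst z k)" and e1: "(\<integral>z. fst z k \<partial>JN) = m k"
    using coupling_fst[OF J_coupling comp_meas_M(1) int_Mx(1)] unfolding m_def by auto
  have i2: "integrable JN (\<lambda>z. snd z k)" and e2: "(\<integral>z. snd z k \<partial>JN) = m' k"
    using coupling_snd[OF J_coupling comp_meas_M(2) int_Mx(2)] unfolding m'_def by auto
  have ae: "AE z in JN. jinv N z" using J_inv[OF lN] .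
  have o: "(AE z in JN. fst z k \<le> snd z k) \<or> (AE z in JN. snd z k \<le> fst z k)"
  proof (cases "x k \<le> x' k")
    case True
    have "AE z in JN. fst z k \<le> snd z k" using ae by eventually_elim (use True in \<open>auto simp: jinv_def\<close>)
    then show ?thesis by simp
  next
    case False
    then have F: "x' k \<le> x k" by simp
    have "AE z in JN. snd z k \<le> fst z k" using ae by eventually_elim (use F in \<open>auto simp: jinv_def\<close>)
    then show ?thesis by simp
  qed
  show ?thesis using mean_eq[OF i1 i2 o] e1 e2 by simp
qed

end


context fin begin

lemma mJ: "(\<lambda>z. (fst z k, snd z k)) \<in> JN \<rightarrow>\<^sub>M (borel \<Otimes>\<^sub>M borel :: (real \<times> real) measure)"
  by (subst measurable_cong_sets[OF J_sets[OF lN] refl]) measurable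

lemma mfJ: "fst \<in> JN \<rightarrow>\<^sub>M borel"
  by (subst measurable_cong_sets[OF J_sets[OF lN] refl]) (rule measurable_fst)
lemma msJ: "snd \<in> JN \<rightarrow>\<^sub>M borel"
  by (subst measurable_cong_sets[OF J_sets[OF lN] refl]) (rule measurable_snd)

lemma Kk: "kantorovich (\<lambda>s t. \<bar>s - t\<bar>) (distr Mx borel (\<lambda>y. y k)) (distr Mx' borel (\<lambda>y. y k)) = ennreal \<bar>m k - m' k\<bar>"
proof (rule antisym)
  let ?\<mu> = "distr Mx borel (\<lambda>y. y k)" and ?\<nu> = "distr Mx' borel (\<lambda>y. y k)"
  let ?h = "\<lambda>z. (fst z k, snd z k)"
  let ?\<pi> = "distr JN (borel \<Otimes>\<^sub>M borel :: (real \<times> real) measure) ?h"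
  have c: "?\<pi> \<in> couplings ?\<mu> ?\<nu>"
    unfolding couplings_def
  proof (intro CollectI conjI)
    show "sets ?\<pi> = sets (?\<mu> \<Otimes>\<^sub>M ?\<nu>)"
      using sets_pair_measure_cong[of ?\<mu> "borel :: real measure" ?\<nu> "borel :: real measure"] by simp
    show "prob_space ?\<pi>"
      by (rule prob_space.prob_space_distr[OF J_prob[OF lN] mJ])
    have "distr ?\<pi> ?\<mu> fst = distr ?\<pi> borel fst"
      by (rule distr_cong) auto
    also have "\<dots> = distr JN borel (fst \<circ> ?h)"
      by (rule distr_distr[OF measurable_fst mJ])
    also have "\<dots> = distr JN borel ((\<lambda>y. y k) \<circ> fst)"
      by (simp add: comp_def)
    also have "\<dots> = distr (distr JN borel fst) borel (\<lambda>y. y k)"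
      by (rule distr_distr[OF comp_meas mfJ, symmetric])
    also have "\<dots> = ?\<mu>" using J_marg[OF lN] by simp
    finally show "distr ?\<pi> ?\<mu> fst = ?\<mu>" .
    have "distr ?\<pi> ?\<nu> snd = distr ?\<pi> borel snd"
      by (rule distr_cong) auto
    also have "\<dots> = distr JN borel (snd \<circ> ?h)"
      by (rule distr_distr[OF measurable_snd mJ])
    also have "\<dots> = distr JN borel ((\<lambda>y. y k) \<circ> snd)"
      by (simp add: comp_def)
    also have "\<dots> = distr (distr JN borel snd) borel (\<lambda>y. y k)"
      by (rule distr_distr[OF comp_meas msJ, symmetric])
    also have "\<dots> = ?\<nu>" using J_marg[OF lN] by simp
    finally show "distr ?\<pi> ?\<nu> snd = ?\<nu>" .
  qed
  have "kantorovich (\<lambda>s t. \<bar>s - t\<bar>) ?\<mu> ?\<nu> \<le> (\<integral>\<^sup>+ w. ennreal \<bar>fst w - snd w\<bar> \<partial>?\<pi>)"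
    unfolding kantorovich_def by (rule INF_lower[OF c])
  also have "\<dots> = (\<integral>\<^sup>+ z. ennreal \<bar>fst z k - snd z k\<bar> \<partial>JN)"
    by (subst nn_integral_distr[OF mJ]) (simp_all)
  also have "\<dots> = ennreal \<bar>m k - m' k\<bar>" by (rule D_eq)
  finally show "kantorovich (\<lambda>s t. \<bar>s - t\<bar>) ?\<mu> ?\<nu> \<le> ennreal \<bar>m k - m' k\<bar>" .
  have idm: "(\<lambda>s::real. s) \<in> borel_measurable ?\<mu>" "(\<lambda>s::real. s) \<in> borel_measurable ?\<nu>"
    by (subst measurable_cong_sets[OF sets_distr refl], simp)+
  have i1: "integrable ?\<mu> (\<lambda>s. s)"
    using integrable_distr_eq[OF comp_meas_M(1), of "\<lambda>s. s"] int_Mx(1) by simp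
  have i2: "integrable ?\<nu> (\<lambda>s. s)"
    using integrable_distr_eq[OF comp_meas_M(2), of "\<lambda>s. s"] int_Mx(2) by simp
  have e1: "(\<integral>s. s \<partial>?\<mu>) = m k"
    unfolding m_def by (rule integral_distr[OF comp_meas_M(1)]) simp
  have e2: "(\<integral>s. s \<partial>?\<nu>) = m' k"
    unfolding m'_def by (rule integral_distr[OF comp_meas_M(2)]) simp
  show "ennreal \<bar>m k - m' k\<bar> \<le> kantorovich (\<lambda>s t. \<bar>s - t\<bar>) ?\<mu> ?\<nu>"
    unfolding kantorovich_def
  proof (rule INF_greatest)
    fix \<pi> assume p: "\<pi> \<in> couplings ?\<mu> ?\<nu>"
    show "ennreal \<bar>m k - m' k\<bar> \<le> (\<integral>\<^sup>+ z. ennreal \<bar>fst z - snd z\<bar> \<partial>\<pi>)"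
      using coupling_lower[OF p idm(1) i1 idm(2) i2] e1 e2 by simp
  qed
qed

end


context fin begin

lemma asumm: "a summable_on UNIV" using asum unfolding summable_on_def by blast

lemma pointwise:
  assumes "y \<in> cube" "y' \<in> cube"
  shows "ennreal (weighted_l1 a y y') = (\<Sum>\<^sub>\<infinity>k. ennreal (a k) * ennreal \<bar>y k - y' k\<bar>)"
proof -
  have le: "a k * \<bar>y k - y' k\<bar> \<le> a k" for k
  proof -
    have "0 \<le> y k" "y k \<le> 1" "0 \<le> y' k" "y' k \<le> 1" using assms unfolding cube_def by auto
    then have "\<bar>y k - y' k\<bar> \<le> 1" by (simp add: abs_le_iff)
    then show ?thesis using apos[of k] by (simp add: mult_left_le)
  qed
  have nn: "0 \<le> a k * \<bar>y k - y' k\<bar>" for k using apos[of k] by simp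
  have sm: "(\<lambda>k. a k * \<bar>y k - y' k\<bar>) summable_on UNIV"
    by (rule summable_on_comparison_test[OF asumm le nn])
  have "ennreal (weighted_l1 a y y') = (\<Sum>\<^sub>\<infinity>k. ennreal (a k * \<bar>y k - y' k\<bar>))"
    unfolding weighted_l1_def by (rule ennreal_infsum[OF sm nn])
  also have "\<dots> = (\<Sum>\<^sub>\<infinity>k. ennreal (a k) * ennreal \<bar>y k - y' k\<bar>)"
    using apos by (intro infsum_cong) (simp add: ennreal_mult less_imp_le)
  finally show ?thesis .
qed

lemma cost:
  assumes p: "\<pi> \<in> couplings Mx Mx'"
  shows "(\<integral>\<^sup>+ z. ennreal (weighted_l1 a (fst z) (snd z)) \<partial>\<pi>) =
    (\<Sum>\<^sub>\<infinity>k. ennreal (a k) * (\<integral>\<^sup>+ z. ennreal \<bar>fst z k - snd z k\<bar> \<partial>\<pi>))"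
proof -
  have s0: "sets \<pi> = sets (Mx \<Otimes>\<^sub>M Mx')" and d1: "distr \<pi> Mx fst = Mx" and d2: "distr \<pi> Mx' snd = Mx'"
    using p unfolding couplings_def by auto
  have s: "sets \<pi> = sets BB"
    using s0 sets_pair_measure_cong[OF sMx(1) sMx(2)] by simp
  have mf: "fst \<in> \<pi> \<rightarrow>\<^sub>M Mx"
    by (subst measurable_cong_sets[OF s0 refl]) (rule measurable_fst)
  have ms: "snd \<in> \<pi> \<rightarrow>\<^sub>M Mx'"
    by (subst measurable_cong_sets[OF s0 refl]) (rule measurable_snd)
  have "AE y in distr \<pi> Mx fst. y \<in> cube" unfolding d1 by (rule cubeAE(1))
  then have a1: "AE z in \<pi>. fst z \<in> cube" by (rule AE_distrD[OF mf])
  have "AE y in distr \<pi> Mx' snd. y \<in> cube" unfolding d2 by (rule cubeAE(2))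
  then have a2: "AE z in \<pi>. snd z \<in> cube" by (rule AE_distrD[OF ms])
  have "(\<integral>\<^sup>+ z. ennreal (weighted_l1 a (fst z) (snd z)) \<partial>\<pi>) =
      (\<integral>\<^sup>+ z. (\<Sum>\<^sub>\<infinity>k. ennreal (a k) * ennreal \<bar>fst z k - snd z k\<bar>) \<partial>\<pi>)"
  proof (rule nn_integral_cong_AE)
    show "AE z in \<pi>. ennreal (weighted_l1 a (fst z) (snd z)) = (\<Sum>\<^sub>\<infinity>k. ennreal (a k) * ennreal \<bar>fst z k - snd z k\<bar>)"
      using a1 a2 by eventually_elim (rule pointwise)
  qed
  also have "\<dots> = (\<Sum>\<^sub>\<infinity>k. \<integral>\<^sup>+ z. ennreal (a k) * ennreal \<bar>fst z k - snd z k\<bar> \<partial>\<pi>)"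
  proof (rule nn_integral_infsum)
    fix k
    show "(\<lambda>z. ennreal (a k) * ennreal \<bar>fst z k - snd z k\<bar>) \<in> borel_measurable \<pi>"
      by (subst measurable_cong_sets[OF s refl]) measurable
  qed
  also have "\<dots> = (\<Sum>\<^sub>\<infinity>k. ennreal (a k) * (\<integral>\<^sup>+ z. ennreal \<bar>fst z k - snd z k\<bar> \<partial>\<pi>))"
  proof (rule infsum_cong)
    fix k
    have "(\<lambda>z. ennreal \<bar>fst z k - snd z k\<bar>) \<in> borel_measurable \<pi>"
      by (subst measurable_cong_sets[OF s refl]) measurable
    then show "(\<integral>\<^sup>+ z. ennreal (a k) * ennreal \<bar>fst z k - snd z k\<bar> \<partial>\<pi>) = ennreal (a k) * (\<integral>\<^sup>+ z. ennreal \<bar>fst z k - snd z k\<bar> \<partial>\<pi>)"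
      by (rule nn_integral_cmult)
  qed
  finally show ?thesis .
qed

lemma K: "kantorovich (weighted_l1 a) Mx Mx' = (\<Sum>\<^sub>\<infinity>k. ennreal (a k) * ennreal \<bar>m k - m' k\<bar>)"
proof (rule antisym)
  have "kantorovich (weighted_l1 a) Mx Mx' \<le> (\<integral>\<^sup>+ z. ennreal (weighted_l1 a (fst z) (snd z)) \<partial>JN)"
    unfolding kantorovich_def by (rule INF_lower[OF J_coupling])
  also have "\<dots> = (\<Sum>\<^sub>\<infinity>k. ennreal (a k) * ennreal \<bar>m k - m' k\<bar>)"
    unfolding cost[OF J_coupling] D_eq ..
  finally show "kantorovich (weighted_l1 a) Mx Mx' \<le> (\<Sum>\<^sub>\<infinity>k. ennreal (a k) * ennreal \<bar>m k - m' k\<bar>)" .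
  show "(\<Sum>\<^sub>\<infinity>k. ennreal (a k) * ennreal \<bar>m k - m' k\<bar>) \<le> kantorovich (weighted_l1 a) Mx Mx'"
    unfolding kantorovich_def
  proof (rule INF_greatest)
    fix \<pi> assume p: "\<pi> \<in> couplings Mx Mx'"
    have "(\<Sum>\<^sub>\<infinity>k. ennreal (a k) * ennreal \<bar>m k - m' k\<bar>) \<le> (\<Sum>\<^sub>\<infinity>k. ennreal (a k) * (\<integral>\<^sup>+ z. ennreal \<bar>fst z k - snd z k\<bar> \<partial>\<pi>))"
    proof (rule infsum_mono[OF nonneg_summable_on_complete nonneg_summable_on_complete])
      fix k
      have "ennreal \<bar>m k - m' k\<bar> \<le> (\<integral>\<^sup>+ z. ennreal \<bar>fst z k - snd z k\<bar> \<partial>\<pi>)"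
        using coupling_lower[OF p comp_meas_M(1) int_Mx(1) comp_meas_M(2) int_Mx(2)]
        unfolding m_def m'_def by simp
      then show "ennreal (a k) * ennreal \<bar>m k - m' k\<bar> \<le> ennreal (a k) * (\<integral>\<^sup>+ z. ennreal \<bar>fst z k - snd z k\<bar> \<partial>\<pi>)"
        by (rule mult_left_mono) simp
    qed simp_all
    also have "\<dots> = (\<integral>\<^sup>+ z. ennreal (weighted_l1 a (fst z) (snd z)) \<partial>\<pi>)"
      by (rule cost[OF p, symmetric])
    finally show "(\<Sum>\<^sub>\<infinity>k. ennreal (a k) * ennreal \<bar>m k - m' k\<bar>) \<le> (\<integral>\<^sup>+ z. ennreal (weighted_l1 a (fst z) (snd z)) \<partial>\<pi>)" .
  qed
qed

end


theorem lemma4p6: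
  fixes mu :: "int \<Rightarrow> ('d::countable \<Rightarrow> real) measure"
    and P :: "int \<Rightarrow> ('d \<Rightarrow> real) \<Rightarrow> ('d \<Rightarrow> real) measure"
    and Q :: "'d \<Rightarrow> int \<Rightarrow> real \<Rightarrow> real measure"
    and a :: "'d \<Rightarrow> real"
    and l n :: int
    and x x' :: "'d \<Rightarrow> real"
  assumes "markov_cube mu P"
    and "strongly_monotonic mu P Q"
    and "\<forall>k. a k > 0"
    and "(a has_sum 1) UNIV"
    and "l \<le> n" and "n \<le> 0"
    and "x \<in> support_of (mu l)" and "x' \<in> support_of (mu l)"
  shows "kantorovich (weighted_l1 a) (cond_law P borel l n x) (cond_law P borel l n x') =
    (\<Sum>\<^sub>\<infinity>k. ennreal (a k) *
       kantorovich (\<lambda>s t. \<bar>s - t\<bar>) (cond_law (Q k) borel l n (x k)) (cond_law (Q k) borel l n (x' k)))"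
proof -
  have mono: "monotonic mu P"
    and sQ: "\<forall>k. \<forall>n<0. Q k n \<in> borel \<rightarrow>\<^sub>M prob_algebra borel \<and>
        (\<forall>x\<in>support_of (mu n). distr (P n x) borel (\<lambda>y. y k) = Q k n (x k))"
    using assms(2) unfolding strongly_monotonic_def by auto
  define MP where "MP = (\<lambda>n (C :: ('d \<Rightarrow> real) \<times> ('d \<Rightarrow> real) \<Rightarrow> (('d \<Rightarrow> real) \<times> ('d \<Rightarrow> real)) measure).
        C \<in> (borel \<Otimes>\<^sub>M borel) \<rightarrow>\<^sub>M prob_algebra (borel \<Otimes>\<^sub>M borel) \<and>
        (\<forall>x\<in>support_of (mu n). \<forall>x'\<in>support_of (mu n).
           distr (C (x, x')) borel fst = P n x \<and> distr (C (x, x')) borel snd = P n x' \<and>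
           (\<forall>k. (x k \<le> x' k \<longrightarrow> (AE z in C (x, x'). fst z k \<le> snd z k)) \<and>
                (x k \<ge> x' k \<longrightarrow> (AE z in C (x, x'). fst z k \<ge> snd z k)))))"
  have "\<forall>n<0. \<exists>C. MP n C" using mono unfolding monotonic_def MP_def by simp
  then have "\<forall>n. \<exists>C. n < 0 \<longrightarrow> MP n C" by auto
  then have "\<exists>f. \<forall>n. n < 0 \<longrightarrow> MP n (f n)" by (rule choice)
  then obtain Cf where Cf: "\<forall>n. n < 0 \<longrightarrow> MP n (Cf n)" by (elim exE)
  let ?N = "nat (n - l)"
  have lN: "l + int ?N = n" using assms(5) by simp
  interpret F: fin mu P Cf x x' l Q ?N a
  proof unfold_locales
    show "markov_cube mu P" by (rule assms(1))
    show "\<And>i. i < 0 \<Longrightarrow> Cf i \<in> (borel \<Otimes>\<^sub>M borel) \<rightarrow>\<^sub>M prob_algebra (borel \<Otimes>\<^sub>M borel)"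
      using Cf unfolding MP_def by simp
    show "\<And>i y y'. i < 0 \<Longrightarrow> y \<in> support_of (mu i) \<Longrightarrow> y' \<in> support_of (mu i) \<Longrightarrow>
       distr (Cf i (y, y')) borel fst = P i y \<and> distr (Cf i (y, y')) borel snd = P i y'"
      using Cf unfolding MP_def by simp
    show "\<And>i y y' k. i < 0 \<Longrightarrow> y \<in> support_of (mu i) \<Longrightarrow> y' \<in> support_of (mu i) \<Longrightarrow>
       (y k \<le> y' k \<longrightarrow> (AE z in Cf i (y, y'). fst z k \<le> snd z k)) \<and>
       (y k \<ge> y' k \<longrightarrow> (AE z in Cf i (y, y'). fst z k \<ge> snd z k))"
      using Cf unfolding MP_def by simp
    show "x \<in> support_of (mu l)" "x' \<in> support_of (mu l)" by (rule assms(7), rule assms(8))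
    show "\<And>i k. i < 0 \<Longrightarrow> Q k i \<in> borel \<rightarrow>\<^sub>M prob_algebra borel" using sQ by simp
    show "\<And>i y k. i < 0 \<Longrightarrow> y \<in> support_of (mu i) \<Longrightarrow> distr (P i y) borel (\<lambda>y. y k) = Q k i (y k)"
      using sQ by simp
    show "l + int ?N \<le> 0" using lN assms(6) by simp
    show "\<And>k. 0 < a k" using assms(3) by simp
    show "(a has_sum 1) UNIV" by (rule assms(4))
  qed
  have c1: "cond_law P borel l n x = F.Mx" "cond_law P borel l n x' = F.Mx'"
    unfolding cond_law_def by simp_all
  have c2: "cond_law (Q k) borel l n (x k) = distr F.Mx borel (\<lambda>y. y k)"
    "cond_law (Q k) borel l n (x' k) = distr F.Mx' borel (\<lambda>y. y k)" for k
    unfolding cond_law_def using F.coord_law[OF assms(7) F.lN] F.coord_law[OF assms(8) F.lN] by simp_all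
  show ?thesis
    unfolding c1 c2 F.K F.Kk ..
qed


end
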